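(* Let $(R,v)$ be a discrete valuation domain and let $f=a_0+a_1x+\cdots+a_nx^n\in R[x]$ with $n\ge 2$ and $a_0a_n\neq 0$. Suppose there is an index $s\in\{0,1,\ldots,n-1\}$ such that: (a) $m_i(f)<m_s(f)$ for all $i\in\{0,1,\ldots,n-1\}$ with $i\neq s$; (b) the integer $d=\gcd\bigl(v(a_s)-v(a_n),\,n-s\bigr)$ satisfies $d=n(n-s)\bigl(m_s(f)-m_0(f)\bigr)$ if $s\neq 0$, and $d=1$ if $s=0$. Then either $f$ is irreducible in $R[x]$, or $f$ has a factor in $R[x]$ whose degree is zero or a multiple of $(n-s)/d$. Precisely: whenever $f=f_1f_2$ with $f_1,f_2\in R[x]$, the integer $(n-s)/d$ divides $\deg f_1$ or $\deg f_2$.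
   Context: $(R,v)$ is a discrete valuation domain with (discrete) valuation $v$, extended by $v(0)=+\infty$. For a polynomial $f=a_0+a_1x+\cdots+a_nx^n\in R[x]$ of degree $n$ (so $a_n\ne 0$) and $i\in\{0,\ldots,n-1\}$, define $m_i(f)=\dfrac{v(a_n)-v(a_i)}{n-i}$ (the slope of the segment joining $(i,v(a_i))$ and $(n,v(a_n))$; it equals $-\infty$ if $a_i=0$). *)

theory Defs
  imports "HOL-Computational_Algebra.Polynomial" "HOL-Library.Extended_Real"
begin

text \<open>A discrete valuation domain: an integral domain R together with a discrete
  valuation v : R - {0} -> N (v 0 = +infinity is handled by only using v on
  nonzero elements), such that R is the valuation ring of v, i.e.
  v(x) <= v(y) iff x divides y, and v is surjective onto N (there is a uniformizer).\<close>
definition discrete_valuation_domain :: "('a::idom \<Rightarrow> int) \<Rightarrow> bool" where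
  "discrete_valuation_domain v \<longleftrightarrow>
     (\<forall>x y. x \<noteq> 0 \<longrightarrow> y \<noteq> 0 \<longrightarrow> v (x * y) = v x + v y) \<and>
     (\<forall>x y. x \<noteq> 0 \<longrightarrow> y \<noteq> 0 \<longrightarrow> x + y \<noteq> 0 \<longrightarrow> v (x + y) \<ge> min (v x) (v y)) \<and>
     (\<forall>x. x \<noteq> 0 \<longrightarrow> v x \<ge> 0) \<and>
     (\<forall>x y. x \<noteq> 0 \<longrightarrow> y \<noteq> 0 \<longrightarrow> (x dvd y \<longleftrightarrow> v x \<le> v y)) \<and>
     (\<exists>p. p \<noteq> 0 \<and> v p = 1)"

definition slope_m :: "('a::idom \<Rightarrow> int) \<Rightarrow> 'a poly \<Rightarrow> nat \<Rightarrow> ereal" where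
  "slope_m v f i =
     (if coeff f i = 0 then -\<infinity>
      else ereal (real_of_int (v (lead_coeff f) - v (coeff f i)) / real (degree f - i)))"

end

theory Submission
  imports Defs
begin

lemma dvd_vmult: "discrete_valuation_domain v \<Longrightarrow> x \<noteq> 0 \<Longrightarrow> y \<noteq> 0 \<Longrightarrow> v (x*y) = v x + v y"
  unfolding discrete_valuation_domain_def by blast

lemma dvd_vadd: "discrete_valuation_domain v \<Longrightarrow> x \<noteq> 0 \<Longrightarrow> y \<noteq> 0 \<Longrightarrow> x + y \<noteq> 0 \<Longrightarrow> v (x+y) \<ge> min (v x) (v y)"
  unfolding discrete_valuation_domain_def by blast

lemma dvd_v1: assumes "discrete_valuation_domain v" shows "v 1 = 0"
  using dvd_vmult[OF assms, of 1 1] by simp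

lemma dvd_vneg: assumes V: "discrete_valuation_domain v" shows "v (- x) = v x"
proof (cases "x = 0")
  case True thus ?thesis by simp
next
  case False
  have "v ((-1) * (-1)) = v (-1) + v (-1)" by (rule dvd_vmult[OF V]) auto
  hence m1: "v (-1) = 0" using dvd_v1[OF V] by simp
  have "v ((-1) * x) = v (-1) + v x" by (rule dvd_vmult[OF V]) (use False in auto)
  thus ?thesis using m1 by simp
qed

lemma sum_val_ge:
  assumes V: "discrete_valuation_domain v" and q: "(q::int) > 0" and fin: "finite A"
    and h: "\<forall>a\<in>A. t a = 0 \<or> q * v (t a) \<ge> K"
  shows "sum t A = 0 \<or> q * v (sum t A) \<ge> K"
  using fin h
proof (induction A rule: finite_induct)
  case empty thus ?case by simp
next
  case (insert a A)
  hence IH: "sum t A = 0 \<or> q * v (sum t A) \<ge> K" and ta: "t a = 0 \<or> q * v (t a) \<ge> K" by auto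
  have eq: "sum t (insert a A) = t a + sum t A" using insert by simp
  show ?case
  proof (cases "t a = 0 \<or> sum t A = 0 \<or> t a + sum t A = 0")
    case True thus ?thesis using IH ta eq by auto
  next
    case False
    hence "v (t a + sum t A) \<ge> min (v (t a)) (v (sum t A))" using dvd_vadd[OF V] by blast
    hence "q * v (t a + sum t A) \<ge> q * min (v (t a)) (v (sum t A))" using q by (simp add: mult_left_mono)
    moreover have "q * min (v (t a)) (v (sum t A)) \<ge> K" using IH ta False q
      by (simp add: min_def)
    ultimately show ?thesis using eq by simp
  qed
qed

lemma dom_sum:
  assumes V: "discrete_valuation_domain v" and x: "x \<noteq> 0" and S: "S = 0 \<or> v S > v x"
  shows "x + S \<noteq> 0 \<and> v (x + S) = v x"
proof (cases "S = 0")
  case True thus ?thesis using x by simp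
next
  case False
  hence vs: "v S > v x" using S by simp
  have ne: "x + S \<noteq> 0"
  proof
    assume "x + S = 0"
    hence "x = - S" by (simp add: eq_neg_iff_add_eq_0)
    hence "v x = v S" using dvd_vneg[OF V] by simp
    thus False using vs by simp
  qed
  have "v (x + S) \<ge> min (v x) (v S)" using dvd_vadd[OF V] x False ne by blast
  hence ge: "v (x + S) \<ge> v x" using vs by simp
  have "x = (x + S) + (- S)" by simp
  hence "v x \<ge> min (v (x+S)) (v (- S))" using dvd_vadd[OF V, of "x+S" "-S"] ne False x by simp
  hence "v x \<ge> min (v (x+S)) (v S)" using dvd_vneg[OF V] by simp
  hence "v (x + S) \<le> v x" using vs by (simp add: min_def split: if_splits)
  thus ?thesis using ge ne by simp
qed


definition wt :: "('a::idom \<Rightarrow> int) \<Rightarrow> int \<Rightarrow> int \<Rightarrow> 'a poly \<Rightarrow> nat \<Rightarrow> int" where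
  "wt v q p g j = q * v (coeff g j) + p * int j"

definition Wm :: "('a::idom \<Rightarrow> int) \<Rightarrow> int \<Rightarrow> int \<Rightarrow> 'a poly \<Rightarrow> int" where
  "Wm v q p g = Min (wt v q p g ` {j. coeff g j \<noteq> 0})"

definition Sm :: "('a::idom \<Rightarrow> int) \<Rightarrow> int \<Rightarrow> int \<Rightarrow> 'a poly \<Rightarrow> nat set" where
  "Sm v q p g = {j. coeff g j \<noteq> 0 \<and> wt v q p g j = Wm v q p g}"

definition lo where "lo v q p g = Min (Sm v q p g)"
definition hi where "hi v q p g = Max (Sm v q p g)"

lemma supp_fin: "finite {j. coeff g j \<noteq> 0}"
proof -
  have "{j. coeff g j \<noteq> 0} \<subseteq> {..degree g}" using le_degree by auto
  thus ?thesis using finite_subset by blast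
qed

lemma supp_ne: "g \<noteq> 0 \<Longrightarrow> {j. coeff g j \<noteq> 0} \<noteq> {}"
  using leading_coeff_neq_0[of g] by blast

lemma Wm_le: "coeff g j \<noteq> 0 \<Longrightarrow> Wm v q p g \<le> wt v q p g j"
  unfolding Wm_def using supp_fin by (intro Min_le) auto

lemma Sm_fin: "finite (Sm v q p g)"
  unfolding Sm_def using supp_fin by (rule finite_subset[rotated]) auto

lemma Sm_ne: assumes "g \<noteq> 0" shows "Sm v q p g \<noteq> {}"
proof -
  have "Wm v q p g \<in> wt v q p g ` {j. coeff g j \<noteq> 0}"
    unfolding Wm_def using supp_fin supp_ne[OF assms] by (intro Min_in) auto
  thus ?thesis unfolding Sm_def by auto
qed

lemma lo_in: "g \<noteq> 0 \<Longrightarrow> lo v q p g \<in> Sm v q p g"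
  unfolding lo_def using Sm_fin Sm_ne[of g] by (intro Min_in) auto
lemma hi_in: "g \<noteq> 0 \<Longrightarrow> hi v q p g \<in> Sm v q p g"
  unfolding hi_def using Sm_fin Sm_ne[of g] by (intro Max_in) auto

lemma Sm_iff: "j \<in> Sm v q p g \<longleftrightarrow> coeff g j \<noteq> 0 \<and> wt v q p g j = Wm v q p g"
  unfolding Sm_def by simp

lemma lo_strict: "coeff g j \<noteq> 0 \<Longrightarrow> j < lo v q p g \<Longrightarrow> wt v q p g j > Wm v q p g"
proof (rule ccontr)
  assume a: "coeff g j \<noteq> 0" "j < lo v q p g" "\<not> wt v q p g j > Wm v q p g"
  hence "j \<in> Sm v q p g" using Wm_le[of g j v q p] unfolding Sm_def by force
  hence "lo v q p g \<le> j" unfolding lo_def using Sm_fin by (rule Min_le[rotated])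
  thus False using a by simp
qed

lemma hi_strict: "coeff g j \<noteq> 0 \<Longrightarrow> j > hi v q p g \<Longrightarrow> wt v q p g j > Wm v q p g"
proof (rule ccontr)
  assume a: "coeff g j \<noteq> 0" "j > hi v q p g" "\<not> wt v q p g j > Wm v q p g"
  hence "j \<in> Sm v q p g" using Wm_le[of g j v q p] unfolding Sm_def by force
  hence "hi v q p g \<ge> j" unfolding hi_def using Sm_fin by (rule Max_ge[rotated])
  thus False using a by simp
qed

lemma Wm_eqI: "coeff g j \<noteq> 0 \<Longrightarrow> wt v q p g j = W \<Longrightarrow> (\<And>i. coeff g i \<noteq> 0 \<Longrightarrow> wt v q p g i \<ge> W) \<Longrightarrow> Wm v q p g = W"
  unfolding Wm_def using supp_fin
  by (intro antisym Min_le Min.boundedI) force+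

lemma term_wt:
  assumes V: "discrete_valuation_domain v" and "coeff g j \<noteq> 0" "coeff h k \<noteq> 0"
  shows "q * v (coeff g j * coeff h k) + p * int (j + k) = wt v q p g j + wt v q p h k"
  using dvd_vmult[OF V assms(2,3)] unfolding wt_def by (simp add: algebra_simps)

lemma coeff_ge:
  assumes V: "discrete_valuation_domain v" and q: "q > 0" and ne: "coeff (g*h) i \<noteq> 0"
  shows "wt v q p (g*h) i \<ge> Wm v q p g + Wm v q p h"
proof -
  let ?t = "\<lambda>j. coeff g j * coeff h (i - j)"
  have "\<forall>j\<in>{..i}. ?t j = 0 \<or> q * v (?t j) \<ge> Wm v q p g + Wm v q p h - p * int i"
  proof
    fix j assume j: "j \<in> {..i}"
    show "?t j = 0 \<or> q * v (?t j) \<ge> Wm v q p g + Wm v q p h - p * int i"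
    proof (cases "coeff g j = 0 \<or> coeff h (i-j) = 0")
      case True thus ?thesis by auto
    next
      case False
      hence "q * v (?t j) + p * int (j + (i - j)) = wt v q p g j + wt v q p h (i-j)"
        using term_wt[OF V] by blast
      moreover have "wt v q p g j \<ge> Wm v q p g" "wt v q p h (i-j) \<ge> Wm v q p h"
        using Wm_le False by auto
      moreover have "p * int (j + (i - j)) = p * int i" using j by simp
      ultimately show ?thesis by linarith
    qed
  qed
  hence "sum ?t {..i} = 0 \<or> q * v (sum ?t {..i}) \<ge> Wm v q p g + Wm v q p h - p * int i"
    by (intro sum_val_ge[OF V q]) auto
  thus ?thesis using ne unfolding wt_def coeff_mult by auto
qed

lemma coeff_strict:
  assumes V: "discrete_valuation_domain v" and q: "q > 0"
    and st: "\<forall>j\<le>i. coeff g j = 0 \<or> coeff h (i-j) = 0 \<or> wt v q p g j > Wm v q p g \<or> wt v q p h (i-j) > Wm v q p h"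
  shows "coeff (g*h) i = 0 \<or> wt v q p (g*h) i > Wm v q p g + Wm v q p h"
proof -
  let ?t = "\<lambda>j. coeff g j * coeff h (i - j)"
  have "\<forall>j\<in>{..i}. ?t j = 0 \<or> q * v (?t j) \<ge> Wm v q p g + Wm v q p h - p * int i + 1"
  proof
    fix j assume j: "j \<in> {..i}"
    show "?t j = 0 \<or> q * v (?t j) \<ge> Wm v q p g + Wm v q p h - p * int i + 1"
    proof (cases "coeff g j = 0 \<or> coeff h (i-j) = 0")
      case True thus ?thesis by auto
    next
      case False
      hence "q * v (?t j) + p * int (j + (i - j)) = wt v q p g j + wt v q p h (i-j)"
        using term_wt[OF V] by blast
      moreover have "wt v q p g j \<ge> Wm v q p g" "wt v q p h (i-j) \<ge> Wm v q p h"
        using Wm_le False by auto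
      moreover have "wt v q p g j > Wm v q p g \<or> wt v q p h (i-j) > Wm v q p h" using st j False by auto
      moreover have "p * int (j + (i - j)) = p * int i" using j by simp
      ultimately show ?thesis by linarith
    qed
  qed
  hence "sum ?t {..i} = 0 \<or> q * v (sum ?t {..i}) \<ge> Wm v q p g + Wm v q p h - p * int i + 1"
    by (intro sum_val_ge[OF V q]) auto
  thus ?thesis unfolding wt_def coeff_mult by auto
qed

lemma coeff_dom:
  assumes V: "discrete_valuation_domain v" and q: "q > 0" and j0: "j0 \<le> i"
    and n1: "coeff g j0 \<noteq> 0" and n2: "coeff h (i - j0) \<noteq> 0"
    and w1: "wt v q p g j0 = Wm v q p g" and w2: "wt v q p h (i-j0) = Wm v q p h"
    and st: "\<forall>j\<le>i. j \<noteq> j0 \<longrightarrow> coeff g j = 0 \<or> coeff h (i-j) = 0 \<or> wt v q p g j > Wm v q p g \<or> wt v q p h (i-j) > Wm v q p h"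
  shows "coeff (g*h) i \<noteq> 0 \<and> wt v q p (g*h) i = Wm v q p g + Wm v q p h"
proof -
  let ?t = "\<lambda>j. coeff g j * coeff h (i - j)"
  have "\<forall>j\<in>{..i}-{j0}. ?t j = 0 \<or> q * v (?t j) \<ge> Wm v q p g + Wm v q p h - p * int i + 1"
  proof
    fix j assume j: "j \<in> {..i}-{j0}"
    show "?t j = 0 \<or> q * v (?t j) \<ge> Wm v q p g + Wm v q p h - p * int i + 1"
    proof (cases "coeff g j = 0 \<or> coeff h (i-j) = 0")
      case True thus ?thesis by auto
    next
      case False
      hence "q * v (?t j) + p * int (j + (i - j)) = wt v q p g j + wt v q p h (i-j)"
        using term_wt[OF V] by blast
      moreover have "wt v q p g j \<ge> Wm v q p g" "wt v q p h (i-j) \<ge> Wm v q p h"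
        using Wm_le False by auto
      moreover have "wt v q p g j > Wm v q p g \<or> wt v q p h (i-j) > Wm v q p h" using st j False by auto
      moreover have "p * int (j + (i - j)) = p * int i" using j by simp
      ultimately show ?thesis by linarith
    qed
  qed
  hence S: "sum ?t ({..i}-{j0}) = 0 \<or> q * v (sum ?t ({..i}-{j0})) \<ge> Wm v q p g + Wm v q p h - p * int i + 1"
    by (intro sum_val_ge[OF V q]) auto
  have t0: "q * v (?t j0) + p * int (j0 + (i - j0)) = wt v q p g j0 + wt v q p h (i-j0)"
    using term_wt[OF V n1 n2] .
  have ii: "j0 + (i - j0) = i" using j0 by simp
  have ii2: "p * int (j0 + (i - j0)) = p * int i" using ii by simp
  have x0: "?t j0 \<noteq> 0" using n1 n2 by simp
  have "sum ?t ({..i}-{j0}) = 0 \<or> v (sum ?t ({..i}-{j0})) > v (?t j0)"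
  proof (cases "sum ?t ({..i}-{j0}) = 0")
    case False
    hence "q * v (sum ?t ({..i}-{j0})) > q * v (?t j0)" using S t0 ii2 w1 w2 by linarith
    thus ?thesis using q by (simp add: mult_less_cancel_left)
  qed simp
  from dom_sum[OF V x0 this]
  have "?t j0 + sum ?t ({..i}-{j0}) \<noteq> 0 \<and> v (?t j0 + sum ?t ({..i}-{j0})) = v (?t j0)" .
  moreover have "sum ?t {..i} = ?t j0 + sum ?t ({..i}-{j0})"
    using j0 by (subst sum.remove[of _ j0]) auto
  ultimately show ?thesis unfolding wt_def coeff_mult using t0 ii w1 w2 by (simp add: wt_def)
qed


lemma prod_lemma:
  assumes V: "discrete_valuation_domain v" and q: "q > 0" and g: "g \<noteq> 0" and h: "h \<noteq> 0"
  shows "Wm v q p (g*h) = Wm v q p g + Wm v q p h \<and> lo v q p (g*h) = lo v q p g + lo v q p h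
         \<and> hi v q p (g*h) = hi v q p g + hi v q p h"
proof -
  let ?lg = "lo v q p g" and ?lh = "lo v q p h" and ?hg = "hi v q p g" and ?hh = "hi v q p h"
  let ?W = "Wm v q p g + Wm v q p h"
  have lg: "?lg \<in> Sm v q p g" and lh: "?lh \<in> Sm v q p h" and hg: "?hg \<in> Sm v q p g" and hh: "?hh \<in> Sm v q p h"
    using lo_in hi_in g h by auto
  have d0: "coeff (g*h) (?lg + ?lh) \<noteq> 0 \<and> wt v q p (g*h) (?lg + ?lh) = ?W"
  proof (rule coeff_dom[OF V q, of ?lg])
    show "\<forall>j\<le>?lg + ?lh. j \<noteq> ?lg \<longrightarrow> coeff g j = 0 \<or> coeff h (?lg + ?lh - j) = 0 \<or>
       wt v q p g j > Wm v q p g \<or> wt v q p h (?lg + ?lh - j) > Wm v q p h"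
    proof (intro allI impI)
      fix j assume "j \<le> ?lg + ?lh" "j \<noteq> ?lg"
      hence "j < ?lg \<or> ?lg + ?lh - j < ?lh" by linarith
      thus "coeff g j = 0 \<or> coeff h (?lg + ?lh - j) = 0 \<or>
       wt v q p g j > Wm v q p g \<or> wt v q p h (?lg + ?lh - j) > Wm v q p h"
        using lo_strict by blast
    qed
  qed (use lg lh in \<open>auto simp: Sm_iff\<close>)
  have d1: "coeff (g*h) (?hg + ?hh) \<noteq> 0 \<and> wt v q p (g*h) (?hg + ?hh) = ?W"
  proof (rule coeff_dom[OF V q, of ?hg])
    show "\<forall>j\<le>?hg + ?hh. j \<noteq> ?hg \<longrightarrow> coeff g j = 0 \<or> coeff h (?hg + ?hh - j) = 0 \<or>
       wt v q p g j > Wm v q p g \<or> wt v q p h (?hg + ?hh - j) > Wm v q p h"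
    proof (intro allI impI)
      fix j assume "j \<le> ?hg + ?hh" "j \<noteq> ?hg"
      hence "j > ?hg \<or> ?hg + ?hh - j > ?hh" by linarith
      thus "coeff g j = 0 \<or> coeff h (?hg + ?hh - j) = 0 \<or>
       wt v q p g j > Wm v q p g \<or> wt v q p h (?hg + ?hh - j) > Wm v q p h"
        using hi_strict by blast
    qed
  qed (use hg hh in \<open>auto simp: Sm_iff\<close>)
  have W: "Wm v q p (g*h) = ?W"
    by (rule Wm_eqI[of _ "?lg + ?lh"]) (use d0 coeff_ge[OF V q] in auto)
  have below: "coeff (g*h) i = 0 \<or> wt v q p (g*h) i > ?W" if "i < ?lg + ?lh" for i
  proof (rule coeff_strict[OF V q])
    show "\<forall>j\<le>i. coeff g j = 0 \<or> coeff h (i - j) = 0 \<or> wt v q p g j > Wm v q p g \<or> wt v q p h (i - j) > Wm v q p h"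
    proof (intro allI impI)
      fix j assume "j \<le> i"
      hence "j < ?lg \<or> i - j < ?lh" using that by linarith
      thus "coeff g j = 0 \<or> coeff h (i - j) = 0 \<or> wt v q p g j > Wm v q p g \<or> wt v q p h (i - j) > Wm v q p h"
        using lo_strict by blast
    qed
  qed
  have above: "coeff (g*h) i = 0 \<or> wt v q p (g*h) i > ?W" if "i > ?hg + ?hh" for i
  proof (rule coeff_strict[OF V q])
    show "\<forall>j\<le>i. coeff g j = 0 \<or> coeff h (i - j) = 0 \<or> wt v q p g j > Wm v q p g \<or> wt v q p h (i - j) > Wm v q p h"
    proof (intro allI impI)
      fix j assume "j \<le> i"
      hence "j > ?hg \<or> i - j > ?hh" using that by linarith
      thus "coeff g j = 0 \<or> coeff h (i - j) = 0 \<or> wt v q p g j > Wm v q p g \<or> wt v q p h (i - j) > Wm v q p h"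
        using hi_strict by blast
    qed
  qed
  have gh: "g * h \<noteq> 0" using g h by simp
  have in0: "?lg + ?lh \<in> Sm v q p (g*h)" using d0 W by (simp add: Sm_iff)
  have in1: "?hg + ?hh \<in> Sm v q p (g*h)" using d1 W by (simp add: Sm_iff)
  have "lo v q p (g*h) \<le> ?lg + ?lh" using Min_le[OF Sm_fin in0] by (simp add: lo_def)
  moreover have "lo v q p (g*h) \<ge> ?lg + ?lh"
  proof (rule ccontr)
    assume "\<not> ?thesis"
    hence "lo v q p (g*h) < ?lg + ?lh" by simp
    from below[OF this] lo_in[OF gh] W show False by (auto simp: Sm_iff)
  qed
  moreover have "hi v q p (g*h) \<ge> ?hg + ?hh" using Max_ge[OF Sm_fin in1] by (simp add: hi_def)
  moreover have "hi v q p (g*h) \<le> ?hg + ?hh"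
  proof (rule ccontr)
    assume "\<not> ?thesis"
    hence "hi v q p (g*h) > ?hg + ?hh" by simp
    from above[OF this] hi_in[OF gh] W show False by (auto simp: Sm_iff)
  qed
  ultimately show ?thesis using W by simp
qed

lemma hi_le_deg: "g \<noteq> 0 \<Longrightarrow> hi v q p g \<le> degree g"
  using hi_in[of g v q p] le_degree by (auto simp: Sm_iff)

lemma hi_le_lo:
  assumes g: "g \<noteq> 0" and s: "(s::int) \<ge> 0" and c: "(c::int) \<ge> 0" and dpos: "s*B - c*A > 0"
  shows "hi v s (-A) g \<le> lo v c (-B) g"
proof (rule ccontr)
  let ?t = "hi v s (-A) g" and ?u = "lo v c (-B) g"
  assume "\<not> ?thesis" hence tu: "?t > ?u" by simp
  have t: "?t \<in> Sm v s (-A) g" and u: "?u \<in> Sm v c (-B) g" using hi_in lo_in g by auto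
  have "wt v s (-A) g ?t \<le> wt v s (-A) g ?u" using t u Wm_le[of g ?u v s "-A"] by (auto simp: Sm_iff)
  hence e1: "s * (v (coeff g ?t) - v (coeff g ?u)) \<le> A * (int ?t - int ?u)" unfolding wt_def by (simp add: algebra_simps)
  have "wt v c (-B) g ?u \<le> wt v c (-B) g ?t" using t u Wm_le[of g ?t v c "-B"] by (auto simp: Sm_iff)
  hence e2: "B * (int ?t - int ?u) \<le> c * (v (coeff g ?t) - v (coeff g ?u))" unfolding wt_def by (simp add: algebra_simps)
  define D where "D = v (coeff g ?t) - v (coeff g ?u)"
  define k where "k = int ?t - int ?u"
  have k: "k > 0" using tu unfolding k_def by simp
  have "s * (B * k) \<le> s * (c * D)" using e2 s unfolding D_def k_def by (simp add: mult_left_mono)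
  moreover have "c * (s * D) \<le> c * (A * k)" using e1 c unfolding D_def k_def by (simp add: mult_left_mono)
  ultimately have "(s*B - c*A) * k \<le> 0" by (simp add: algebra_simps)
  moreover have "(s*B - c*A) * k > 0" using dpos k by simp
  ultimately show False by simp
qed


lemma div_gcd_dvd:
  fixes c B X Y :: int
  assumes c: "c > 0" and eq: "c * X = B * Y"
  shows "(c div gcd B c) dvd Y"
proof -
  define g where "g = gcd B c"
  have g: "g > 0" using c unfolding g_def by simp
  obtain c' where c': "c = g * c'" unfolding g_def by (meson gcd_dvd2 dvdE)
  obtain B' where B': "B = g * B'" unfolding g_def by (meson gcd_dvd1 dvdE)
  have cd: "c div g = c'" using c' g by simp
  have bd: "B div g = B'" using B' g by simp
  have cop: "coprime B' c'" using div_gcd_coprime[of B c] c bd cd unfolding g_def by simp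
  have "g * (c' * X) = g * (B' * Y)" using eq c' B' by (simp add: algebra_simps)
  hence "c' * X = B' * Y" using g by simp
  hence "c' dvd B' * Y" by (metis dvd_triv_left)
  hence "c' dvd Y" using cop by (simp add: coprime_commute coprime_dvd_mult_right_iff)
  thus ?thesis using cd unfolding g_def by simp
qed

lemma frac_lt:
  fixes x y :: int and a b :: nat
  assumes "a > 0" "b > 0" "real_of_int x / real a < real_of_int y / real b"
  shows "x * int b < y * int a"
proof -
  have "real_of_int x * real b < real_of_int y * real a" using assms by (simp add: field_simps)
  thus ?thesis by (metis of_int_less_iff of_int_mult of_int_of_nat_eq)
qed


lemma aux_real: "(N::real) \<noteq> 0 \<Longrightarrow> C \<noteq> 0 \<Longrightarrow> N*C*(b/C - x/N) = N*b - C*x"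
  by (simp add: field_simps)

theorem theorem1:
  fixes v :: "'a::idom \<Rightarrow> int" and f :: "'a poly" and s :: nat and d :: int
  assumes dvd: "discrete_valuation_domain v"
    and deg: "degree f \<ge> 2"
    and nz: "coeff f 0 * lead_coeff f \<noteq> 0"
    and s: "s < degree f"
    and a: "\<forall>i < degree f. i \<noteq> s \<longrightarrow> slope_m v f i < slope_m v f s"
    and d_def: "d = gcd (v (coeff f s) - v (lead_coeff f)) (int (degree f - s))"
    and b: "if s \<noteq> 0
            then ereal (real_of_int d) =
                   ereal (real (degree f) * real (degree f - s)) * (slope_m v f s - slope_m v f 0)
            else d = 1"
  shows "\<forall>f1 f2. f = f1 * f2 \<longrightarrow>
           (int (degree f - s) div d) dvd int (degree f1) \<or>
           (int (degree f - s) div d) dvd int (degree f2)"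
proof (intro allI impI)
  fix f1 f2 assume f: "f = f1 * f2"
  define n where "n = degree f"
  define c where "c = int (n - s)"
  define vn where "vn = v (lead_coeff f)"
  define vs where "vs = v (coeff f s)"
  define v0 where "v0 = v (coeff f 0)"
  define A where "A = vs - v0"
  define B where "B = vn - vs"
  have c0: "c > 0" using s unfolding c_def n_def by simp
  have cn: "c = int n - int s" using s unfolding c_def n_def by simp
  have a0: "coeff f 0 \<noteq> 0" and an: "lead_coeff f \<noteq> 0" using nz by auto
  have fnz: "f \<noteq> 0" using an by auto
  have f1: "f1 \<noteq> 0" and f2: "f2 \<noteq> 0" using fnz f by auto
  have dd: "d = gcd B c" unfolding d_def B_def vs_def vn_def c_def n_def
    by (metis gcd_neg1_int minus_diff_eq)
  have dpos: "d > 0" using dd c0 by simp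
  have as: "coeff f s \<noteq> 0"
  proof
    assume z: "coeff f s = 0"
    obtain i where i: "i < degree f" "i \<noteq> s" using deg by (cases "s = 0") (auto intro: that[of 1] that[of 0])
    have "slope_m v f i < slope_m v f s" using a i by simp
    thus False using z unfolding slope_m_def by simp
  qed
  have key1: "c * (vn - v (coeff f j)) < B * (int n - int j)"
    if j: "j < n" "j \<noteq> s" "coeff f j \<noteq> 0" for j
  proof -
    have "slope_m v f j < slope_m v f s" using a j unfolding n_def by simp
    hence "real_of_int (vn - v (coeff f j)) / real (n - j) < real_of_int B / real (n - s)"
      using j as unfolding slope_m_def B_def vn_def vs_def n_def by simp
    hence "(vn - v (coeff f j)) * int (n - s) < B * int (n - j)"
      using j s unfolding n_def by (intro frac_lt) auto
    thus ?thesis using j s unfolding c_def n_def by (simp add: of_nat_diff mult.commute)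
  qed
  have cB: "c * vn - B * int n = c * vs - B * int s" unfolding B_def cn by (simp add: algebra_simps)
  have key1': "c * v (coeff f j) - B * int j > c * vn - B * int n"
    if j: "j < n" "j \<noteq> s" "coeff f j \<noteq> 0" for j
    using key1[OF j] by (simp add: algebra_simps)
  have le_n: "coeff f j \<noteq> 0 \<Longrightarrow> j \<le> n" for j unfolding n_def using le_degree by blast
  have Wf: "Wm v c (-B) f = c * vn - B * int n"
  proof (rule Wm_eqI[of _ n])
    show "coeff f n \<noteq> 0" using an unfolding n_def by simp
    show "wt v c (- B) f n = c * vn - B * int n" unfolding wt_def vn_def n_def by simp
    fix i assume i: "coeff f i \<noteq> 0"
    show "wt v c (- B) f i \<ge> c * vn - B * int n"
    proof (cases "i = n \<or> i = s")
      case True thus ?thesis using cB unfolding wt_def vn_def vs_def n_def by auto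
    next
      case False thus ?thesis using key1'[of i] le_n[OF i] i unfolding wt_def by force
    qed
  qed
  have Sf: "Sm v c (-B) f = {s, n}"
  proof (rule set_eqI)
    fix i
    show "i \<in> Sm v c (-B) f \<longleftrightarrow> i \<in> {s, n}"
    proof (cases "i = n \<or> i = s")
      case True thus ?thesis using cB as an Wf unfolding Sm_iff wt_def vn_def vs_def n_def by auto
    next
      case False
      have "\<not> (coeff f i \<noteq> 0 \<and> wt v c (-B) f i = Wm v c (-B) f)"
      proof
        assume h: "coeff f i \<noteq> 0 \<and> wt v c (-B) f i = Wm v c (-B) f"
        hence "i < n" using le_n False by force
        thus False using key1'[of i] h False Wf unfolding wt_def by auto
      qed
      thus ?thesis using False unfolding Sm_iff by auto
    qed
  qed
  have sn: "s < n" using s unfolding n_def .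
  have lof: "lo v c (-B) f = s" unfolding lo_def Sf using sn by simp
  have hif: "hi v c (-B) f = n" unfolding hi_def Sf using sn by simp
  note P1 = prod_lemma[OF dvd c0 f1 f2, of "-B"]
  have degs: "degree f1 + degree f2 = n" using f f1 f2 unfolding n_def by (simp add: degree_mult_eq)
  have sumlo: "lo v c (-B) f1 + lo v c (-B) f2 = s" using P1 lof f by simp
  have sumhi: "hi v c (-B) f1 + hi v c (-B) f2 = n" using P1 hif f by simp
  have h1: "hi v c (-B) f1 = degree f1" and h2: "hi v c (-B) f2 = degree f2"
    using hi_le_deg[OF f1, of v c "-B"] hi_le_deg[OF f2, of v c "-B"] sumhi degs by linarith+
  have edvd: "(c div d) dvd int (degree g)"
    if g: "g \<noteq> 0" "hi v c (-B) g = degree g" "lo v c (-B) g = 0" for g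
  proof -
    have "0 \<in> Sm v c (-B) g" "degree g \<in> Sm v c (-B) g" using lo_in[OF g(1), of v c "-B"] hi_in[OF g(1), of v c "-B"] g by auto
    hence "wt v c (-B) g 0 = wt v c (-B) g (degree g)" by (simp add: Sm_iff)
    hence "c * (v (coeff g (degree g)) - v (coeff g 0)) = B * int (degree g)"
      unfolding wt_def by (simp add: algebra_simps)
    thus ?thesis unfolding dd by (rule div_gcd_dvd[OF c0])
  qed
  have main: "lo v c (-B) f1 = 0 \<or> lo v c (-B) f2 = 0"
  proof (cases "s = 0")
    case True thus ?thesis using sumlo by simp
  next
    case sne: False
    have sp: "int s > 0" using sne by simp
    have "ereal (real_of_int d) =
                   ereal (real n * real (n - s)) * (slope_m v f s - slope_m v f 0)"
      using b sne unfolding n_def by simp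
    hence "real_of_int d = real n * real (n - s) *
             (real_of_int B / real (n - s) - real_of_int (vn - v0) / real n)"
      using as a0 unfolding slope_m_def B_def vn_def vs_def v0_def n_def by simp
    moreover have "real n * real (n - s) * (real_of_int B / real (n - s) - real_of_int (vn - v0) / real n)
       = real n * real_of_int B - real (n - s) * real_of_int (vn - v0)"
      by (rule aux_real) (use sn sne in auto)
    ultimately have "real_of_int d = real n * real_of_int B - real (n - s) * real_of_int (vn - v0)"
      by (rule trans)
    moreover have "real_of_int (int n * B - c * (vn - v0)) = real n * real_of_int B - real (n - s) * real_of_int (vn - v0)"
      unfolding c_def by simp
    ultimately have "real_of_int d = real_of_int (int n * B - c * (vn - v0))" by linarith
    hence "d = int n * B - c * (vn - v0)" by (simp only: of_int_eq_iff)
    hence dform: "d = int s * B - c * A" unfolding A_def B_def cn by (simp add: algebra_simps)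
    obtain c' where c': "c = d * c'" using dd by (meson gcd_dvd2 dvdE)
    obtain B' where B': "B = d * B'" using dd by (meson gcd_dvd1 dvdE)
    have "d * (int s * B' - c' * A) = d * 1" using dform c' B' by (simp add: algebra_simps)
    hence one: "int s * B' - c' * A = 1" using dpos by simp
    have cop: "coprime (int s) A"
    proof -
      have "gcd (int s) A dvd int s * B' - c' * A" by (simp add: dvd_diff)
      hence "gcd (int s) A dvd 1" using one by simp
      thus ?thesis using gcd_eq_1_imp_coprime by (simp add: is_unit_gcd)
    qed
    have cp: "c' > 0" using c0 dpos c' by (simp add: zero_less_mult_iff)
    have key2: "int s * v (coeff f j) - A * int j > int s * v0"
      if j: "coeff f j \<noteq> 0" "j \<noteq> 0" "j \<noteq> s" for j
    proof (cases "j = n")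
      case True
      have "int s * vn - A * int n - int s * v0 = d" unfolding dform A_def B_def cn by (simp add: algebra_simps)
      thus ?thesis using True dpos unfolding vn_def n_def by simp
    next
      case False
      hence jn: "j < n" using le_n[OF j(1)] by simp
      define D where "D = v (coeff f j) - vs"
      have "c * D > B * (int j - int s)" using key1'[OF jn j(3) j(1)] cB unfolding D_def by (simp add: algebra_simps)
      hence "d * (c' * D) > d * (B' * (int j - int s))" using c' B' by (simp add: algebra_simps)
      hence "c' * D > B' * (int j - int s)" using dpos by (simp add: mult_less_cancel_left)
      hence ge: "c' * D \<ge> B' * (int j - int s) + 1" by simp
      have "int s * (c' * D) \<ge> int s * (B' * (int j - int s) + 1)" using ge by (simp add: mult_left_mono)
      hence "c' * (int s * D - A * (int j - int s)) \<ge> (int j - int s) * (int s * B' - c' * A) + int s"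
        by (simp add: algebra_simps)
      hence "c' * (int s * D - A * (int j - int s)) \<ge> int j" using one by simp
      hence "c' * (int s * D - A * (int j - int s)) > 0" using j by simp
      hence "int s * D - A * (int j - int s) > 0" using cp by (simp add: zero_less_mult_iff)
      thus ?thesis unfolding D_def A_def by (simp add: algebra_simps)
    qed
    have Wf2: "Wm v (int s) (-A) f = int s * v0"
    proof (rule Wm_eqI[of _ 0])
      show "coeff f 0 \<noteq> 0" using a0 .
      show "wt v (int s) (- A) f 0 = int s * v0" unfolding wt_def v0_def by simp
      fix i assume i: "coeff f i \<noteq> 0"
      show "wt v (int s) (- A) f i \<ge> int s * v0"
      proof (cases "i = 0 \<or> i = s")
        case True thus ?thesis unfolding wt_def v0_def A_def vs_def by (auto simp: algebra_simps)
      next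
        case False thus ?thesis using key2[of i] i unfolding wt_def by force
      qed
    qed
    have Sf2: "Sm v (int s) (-A) f = {0, s}"
    proof (rule set_eqI)
      fix i
      show "i \<in> Sm v (int s) (-A) f \<longleftrightarrow> i \<in> {0, s}"
      proof (cases "i = 0 \<or> i = s")
        case True thus ?thesis using as a0 Wf2 unfolding Sm_iff wt_def v0_def A_def vs_def
          by (auto simp: algebra_simps)
      next
        case False
        have "\<not> (coeff f i \<noteq> 0 \<and> wt v (int s) (-A) f i = Wm v (int s) (-A) f)"
          using key2[of i] False Wf2 unfolding wt_def by auto
        thus ?thesis using False unfolding Sm_iff by auto
      qed
    qed
    have lof2: "lo v (int s) (-A) f = 0" unfolding lo_def Sf2 by simp
    have hif2: "hi v (int s) (-A) f = s" unfolding hi_def Sf2 by simp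
    note P2 = prod_lemma[OF dvd sp f1 f2, of "-A"]
    have lo20: "lo v (int s) (-A) f1 = 0" using P2 lof2 f by simp
    have sumhi2: "hi v (int s) (-A) f1 + hi v (int s) (-A) f2 = s" using P2 hif2 f by simp
    have dp': "int s * B - c * A > 0" using dform dpos by simp
    have l1: "hi v (int s) (-A) f1 \<le> lo v c (-B) f1" by (rule hi_le_lo[OF f1 _ _ dp']) (use c0 in auto)
    have l2: "hi v (int s) (-A) f2 \<le> lo v c (-B) f2" by (rule hi_le_lo[OF f2 _ _ dp']) (use c0 in auto)
    define t where "t = hi v (int s) (-A) f1"
    have teq: "t = lo v c (-B) f1" using l1 l2 sumhi2 sumlo unfolding t_def by linarith
    have "0 \<in> Sm v (int s) (-A) f1" "t \<in> Sm v (int s) (-A) f1"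
      using lo_in[OF f1, of v "int s" "-A"] hi_in[OF f1, of v "int s" "-A"] lo20 unfolding t_def by auto
    hence "wt v (int s) (-A) f1 0 = wt v (int s) (-A) f1 t" by (simp add: Sm_iff)
    hence "A * int t = int s * (v (coeff f1 t) - v (coeff f1 0))" unfolding wt_def by (simp add: algebra_simps)
    hence "int s dvd A * int t" by simp
    hence "int s dvd int t" using cop by (simp add: coprime_dvd_mult_right_iff)
    hence "s dvd t" by simp
    moreover have "t \<le> s" using sumhi2 unfolding t_def by linarith
    ultimately have "t = 0 \<or> t = s" by (metis dvd_imp_le le_antisym neq0_conv)
    thus ?thesis using teq sumlo by auto
  qed
  show "(int (degree f - s) div d) dvd int (degree f1) \<or> (int (degree f - s) div d) dvd int (degree f2)"
    using main edvd[OF f1 h1] edvd[OF f2 h2] unfolding c_def n_def by blast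
qed

end
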